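(* There do not exist constants $\ell,m\in\mathbb{N}$ with the following property: every trinomial $f\in\mathbb{R}[x_1]$ that is positive on all of $\mathbb{R}$ can be written as $f=g_1^2+\cdots+g_\ell^2$ for some $g_1,\dots,g_\ell\in\mathbb{R}[x_1]$, each having at most $m$ monomial terms.
   Context: A trinomial is a univariate polynomial with exactly three nonzero monomial terms. *)

theory Defs
  imports "HOL-Computational_Algebra.Polynomial"
begin

definition num_terms :: "'a::zero poly \<Rightarrow> nat" where
  "num_terms p = card {k. coeff p k \<noteq> 0}"

definition trinomial :: "'a::zero poly \<Rightarrow> bool" where
  "trinomial p \<longleftrightarrow> num_terms p = 3"

end

theory Submission
  imports Defs
begin

lemma coeff_mult_low0:
  fixes q r :: "real poly"
  assumes "\<forall>j<d. coeff q j = 0" "k < d"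
  shows "coeff (q * r) k = 0"
  unfolding coeff_mult using assms by (intro sum.neutral) auto

lemma coeff_lin: "coeff [:a, b:] k = (if k = 0 then a else if k = 1 then b else (0::real))"
proof (cases k)
  case (Suc k') thus ?thesis by (cases k') auto
qed simp

lemma finite_supp: "finite {k. coeff (p::real poly) k \<noteq> 0}"
proof -
  have "{k. coeff p k \<noteq> 0} \<subseteq> {..degree p}" using le_degree by auto
  thus ?thesis using finite_subset by blast
qed

lemma trin_pos:
  fixes D :: nat
  assumes "D = 2 * n" "n \<ge> 1"
  defines "f \<equiv> [:1, -1:] + monom (1::real) D"
  shows "trinomial f \<and> (\<forall>x. poly f x > 0)"
proof
  have cf: "coeff f k = (if k = 0 then 1 else if k = 1 then -1 else if k = D then 1 else 0)" for k
    using assms unfolding f_def coeff_add coeff_lin[of 1 "-1"] coeff_monom by auto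
  have "{k. coeff f k \<noteq> 0} = {0, 1, D}"
    using assms(1,2) by (auto simp: cf)
  moreover have "card {0, 1, D} = 3" using assms by auto
  ultimately show "trinomial f" unfolding trinomial_def num_terms_def by simp
  show "\<forall>x. poly f x > 0"
  proof
    fix x :: real
    have pf: "poly f x = 1 - x + x ^ D" by (simp add: f_def poly_monom)
    have ev: "x ^ D \<ge> 0" using assms by (simp add: zero_le_power_eq)
    show "poly f x > 0"
    proof (cases "x < 1")
      case True thus ?thesis using pf ev by simp
    next
      case False
      have "x ^ 1 \<le> x ^ D" using False assms by (intro power_increasing) auto
      thus ?thesis using pf False by simp
    qed
  qed
qed

theorem theorem1p2:
  shows "\<not> (\<exists>(l::nat) (m::nat). \<forall>f :: real poly.
            trinomial f \<and> (\<forall>x::real. poly f x > 0) \<longrightarrow>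
            (\<exists>g :: nat \<Rightarrow> real poly.
               f = (\<Sum>i<l. (g i)\<^sup>2) \<and> (\<forall>i<l. num_terms (g i) \<le> m)))"
proof
  assume "\<exists>(l::nat) (m::nat). \<forall>f :: real poly.
            trinomial f \<and> (\<forall>x::real. poly f x > 0) \<longrightarrow>
            (\<exists>g :: nat \<Rightarrow> real poly.
               f = (\<Sum>i<l. (g i)\<^sup>2) \<and> (\<forall>i<l. num_terms (g i) \<le> m))"
  then obtain l m where H: "\<And>f :: real poly.
            trinomial f \<Longrightarrow> (\<forall>x::real. poly f x > 0) \<Longrightarrow>
            (\<exists>g :: nat \<Rightarrow> real poly.
               f = (\<Sum>i<l. (g i)\<^sup>2) \<and> (\<forall>i<l. num_terms (g i) \<le> m))" by blast
  define N where "N = l * m"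
  define D :: nat where "D = 2 * 2 ^ (N + 1)"
  define f where "f = [:1, -1:] + monom (1::real) D"
  have "trinomial f \<and> (\<forall>x. poly f x > 0)"
    unfolding f_def by (rule trin_pos[OF D_def]) simp
  then obtain g where fg: "f = (\<Sum>i<l. (g i)\<^sup>2)" and gm: "\<forall>i<l. num_terms (g i) \<le> m"
    using H by blast
  define E where "E = (\<Union>i<l. {k. coeff (g i) k \<noteq> 0})"
  have finE: "finite E" unfolding E_def using finite_supp by auto
  have "card E \<le> (\<Sum>i<l. card {k. coeff (g i) k \<noteq> 0})"
    unfolding E_def by (rule card_UN_le) simp
  also have "\<dots> \<le> (\<Sum>i<l. m)"
    using gm by (intro sum_mono) (auto simp: num_terms_def)
  finally have cardE: "card E \<le> N" by (simp add: N_def)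
  have "\<exists>j\<le>N. \<forall>e\<in>E. \<not> (2^j \<le> e \<and> e < 2^(j+1))"
  proof (rule ccontr)
    assume "\<not> ?thesis"
    then have "\<forall>j. \<exists>e. j \<le> N \<longrightarrow> e \<in> E \<and> 2^j \<le> e \<and> e < (2::nat)^(j+1)" by blast
    then obtain h where h: "\<And>j. j \<le> N \<Longrightarrow> h j \<in> E \<and> 2^j \<le> h j \<and> h j < (2::nat)^(j+1)"
      by metis
    have "inj_on h {..N}"
    proof (rule inj_onI)
      fix j j' assume "j \<in> {..N}" "j' \<in> {..N}" "h j = h j'"
      then have a: "(2::nat)^j < 2^(j'+1)" "(2::nat)^j' < 2^(j+1)" using h
        by (metis atMost_iff le_less_trans)+
      have "j < j' + 1" using a(1) by (metis power_strict_increasing_iff one_less_numeral_iff semiring_norm(76))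
      moreover have "j' < j + 1" using a(2) by (metis power_strict_increasing_iff one_less_numeral_iff semiring_norm(76))
      ultimately show "j = j'" by simp
    qed
    moreover have "h ` {..N} \<subseteq> E" using h by auto
    ultimately have "card {..N} \<le> card E" using finE by (metis card_inj_on_le)
    thus False using cardE by simp
  qed
  then obtain j where jN: "j \<le> N" and gap: "\<And>e. e \<in> E \<Longrightarrow> \<not> (2^j \<le> e \<and> e < 2^(j+1))"
    by blast
  define d :: nat where "d = 2 ^ j"
  have d1: "d \<ge> 1" by (simp add: d_def)
  have dD: "2 * d < D"
  proof -
    have "(2::nat)^j < 2^(N+1)" using jN by (intro power_strict_increasing) auto
    thus ?thesis by (simp add: d_def D_def)
  qed
  define p where "p i = (\<Sum>k<d. monom (coeff (g i) k) k)" for i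
  define q where "q i = g i - p i" for i
  have cp: "coeff (p i) k = (if k < d then coeff (g i) k else 0)" for i k
    unfolding p_def by (simp add: coeff_sum coeff_monom)
  have cq: "\<forall>k<2*d. coeff (q i) k = 0" if "i < l" for i
  proof (intro allI impI)
    fix k assume k: "k < 2 * d"
    show "coeff (q i) k = 0"
    proof (cases "k < d")
      case True thus ?thesis by (simp add: q_def cp)
    next
      case False
      have "k \<notin> E" using gap[of k] False k by (auto simp: d_def)
      hence "coeff (g i) k = 0" using that unfolding E_def by auto
      thus ?thesis using False by (simp add: q_def cp)
    qed
  qed
  define P where "P = (\<Sum>i<l. (p i)\<^sup>2)"
  have fPQ: "f = P + (\<Sum>i<l. q i * (2 * p i + q i))"
    unfolding fg P_def sum.distrib[symmetric]
    by (intro sum.cong) (auto simp: q_def power2_eq_square algebra_simps)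
  have degp: "degree (p i) \<le> d - 1" for i
    by (rule degree_le) (auto simp: cp)
  have degP: "degree P \<le> 2 * (d - 1)"
    unfolding P_def
  proof (rule degree_sum_le)
    fix i show "degree ((p i)\<^sup>2) \<le> 2 * (d - 1)"
      using degree_power_le[of "p i" 2] degp[of i] by linarith
  qed simp
  have "P = [:1, -1:]"
  proof (rule poly_eqI)
    fix k
    show "coeff P k = coeff [:1, -1:] k"
    proof (cases "k < 2 * d")
      case True
      have "coeff f k = coeff P k"
        unfolding fPQ using True cq by (simp add: coeff_sum, intro sum.neutral ballI coeff_mult_low0) auto
      moreover have "coeff f k = coeff [:1, -1:] k"
        using True dD by (simp add: f_def coeff_monom)
      ultimately show ?thesis by simp
    next
      case False
      have "coeff P k = 0" using degP False d1 by (intro coeff_eq_0) linarith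
      moreover have "coeff [:1, -1::real:] k = 0" using False d1
        by (auto simp: coeff_lin)
      ultimately show ?thesis by simp
    qed
  qed
  hence "poly P 2 = -1" by simp
  moreover have "poly P 2 \<ge> 0" unfolding P_def by (simp add: poly_sum sum_nonneg)
  ultimately show False by simp
qed

end
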